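(* Let $(A(n))_{n\ge1}$ be an i.i.d. sequence of random $(\max,+)$ operators on $\mathbb R^d$ with the memory loss property, such that $\|A(1)0\|_\infty$ has a finite $(4+\epsilon)$-th moment for some $\epsilon>0$, and let $X^0\in L^\infty$ be independent of $(A(n))$. If $(A(n))$ is algebraically arithmetic, then there exist $a,b\in\mathbb R$ such that $$\{\rho_{\max}(B): B\in S_A,\ \mathcal G(B)\text{ strongly connected}\}\subset a+b\mathbb Z.$$
   Context: $\mathbb R_{\max}=\mathbb R\cup\{-\infty\}$. A $d\times d$ matrix $A$ over $\mathbb R_{\max}$ with no row identically $-\infty$ defines a $(\max,+)$ operator on $\mathbb R^d$ by $(Ax)_i=\max_j(A_{ij}+x_j)$; composition is the $(\max,+)$ product $(AB)_{ij}=\max_p(A_{ip}+B_{pj})$. Such operators are topical (isotone and $A(x+a\mathbf 1)=Ax+a\mathbf 1$, $\mathbf 1=(1,\dots,1)'$); $Top_d$ is the set of all topical operators on $\mathbb R^d$. Let $\bar x$ be the class of $x$ modulo $\mathbb R\mathbf 1$. A topical operator $A$ has rank 1 if $\overline{Ax}$ does not depend on $x$; the sequence has the memory loss property if some $A(N)\cdots A(1)$ has rank 1 with positive probability. $A(1)0$ is the image of the zero vector. $S_A$ is the support of the law of $A(1)$ and $T_A$ the semigroup it generates. The sequence is algebraically arithmetic if there are $a,b\in\mathbb R$ and $\theta\in Top_d$ of rank 1 such that for all $A\in S_A$ and all $\theta'\in T_A$ of rank 1, $(\theta A\theta'-\theta\theta')(\mathbb R^d)\subset(a+b\mathbb Z)\mathbf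 1$. The graph $\mathcal G(B)$ has nodes $1,\dots,d$ and arcs $(i,j)$ with weight $B_{ij}$ whenever $B_{ij}>-\infty$; it is strongly connected if every node can be reached from every other. $\rho_{\max}(B)$ is the maximum over elementary circuits $(i_1,\dots,i_n,i_1)$ of $\mathcal G(B)$ of the average weight $\frac1n\sum_{j=1}^nB_{i_ji_{j+1}}$. *)

theory Defs
  imports "HOL-Probability.Probability"
begin

text \<open>Matrices over R_max = R \<union> {-\<infinity>}, indexed by a finite type 'd of size d.\<close>

type_synonym 'd mpmat = "'d \<Rightarrow> 'd \<Rightarrow> ereal"

definition mp_matrix :: "('d::finite) mpmat \<Rightarrow> bool" where
  "mp_matrix B \<longleftrightarrow> (\<forall>i j. B i j \<noteq> \<infinity>) \<and> (\<forall>i. \<exists>j. B i j \<noteq> -\<infinity>)"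

definition mp_op :: "('d::finite) mpmat \<Rightarrow> ('d \<Rightarrow> real) \<Rightarrow> ('d \<Rightarrow> real)" where
  "mp_op B x = (\<lambda>i. real_of_ereal (Max (range (\<lambda>j. B i j + ereal (x j)))))"

definition topical :: "(('d::finite \<Rightarrow> real) \<Rightarrow> ('d \<Rightarrow> real)) \<Rightarrow> bool" where
  "topical f \<longleftrightarrow> mono f \<and> (\<forall>x a. f (\<lambda>i. x i + a) = (\<lambda>i. f x i + a))"

definition rank_one :: "(('d::finite \<Rightarrow> real) \<Rightarrow> ('d \<Rightarrow> real)) \<Rightarrow> bool" where
  "rank_one f \<longleftrightarrow> (\<forall>x y. \<exists>c. f x = (\<lambda>i. f y i + c))"

fun iter_op :: "(nat \<Rightarrow> 'a \<Rightarrow> ('d::finite) mpmat) \<Rightarrow> nat \<Rightarrow> 'a \<Rightarrow> ('d \<Rightarrow> real) \<Rightarrow> ('d \<Rightarrow> real)" where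
  "iter_op A 0 \<omega> = id"
| "iter_op A (Suc n) \<omega> = mp_op (A (Suc n) \<omega>) \<circ> iter_op A n \<omega>"

definition mp_support :: "'a measure \<Rightarrow> ('a \<Rightarrow> ('d::finite) mpmat) \<Rightarrow> 'd mpmat set" where
  "mp_support M X = {B. mp_matrix B \<and>
      (\<forall>U. open U \<longrightarrow> B \<in> U \<longrightarrow> measure M {\<omega> \<in> space M. X \<omega> \<in> U} > 0)}"

inductive_set gen_semigroup :: "('d::finite) mpmat set \<Rightarrow> (('d \<Rightarrow> real) \<Rightarrow> ('d \<Rightarrow> real)) set"
  for S where
  base: "B \<in> S \<Longrightarrow> mp_op B \<in> gen_semigroup S"
| step: "f \<in> gen_semigroup S \<Longrightarrow> B \<in> S \<Longrightarrow> mp_op B \<circ> f \<in> gen_semigroup S"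

definition alg_arithmetic :: "('d::finite) mpmat set \<Rightarrow> bool" where
  "alg_arithmetic S \<longleftrightarrow> (\<exists>(a::real) (b::real) \<theta>. topical \<theta> \<and> rank_one \<theta> \<and>
     (\<forall>B\<in>S. \<forall>\<theta>'\<in>gen_semigroup S. rank_one \<theta>' \<longrightarrow>
        (\<forall>x. \<exists>k::int. \<forall>i. \<theta> (mp_op B (\<theta>' x)) i - \<theta> (\<theta>' x) i = a + b * of_int k)))"

definition strongly_connected :: "('d::finite) mpmat \<Rightarrow> bool" where
  "strongly_connected B \<longleftrightarrow> (\<forall>i j. (i, j) \<in> {(p, q). B p q \<noteq> -\<infinity>}\<^sup>*)"

definition elem_circuits :: "('d::finite) mpmat \<Rightarrow> 'd list set" where
  "elem_circuits B = {c. c \<noteq> [] \<and> distinct c \<and>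
      (\<forall>k < length c. B (c ! k) (c ! ((k + 1) mod length c)) \<noteq> -\<infinity>)}"

definition circuit_mean :: "('d::finite) mpmat \<Rightarrow> 'd list \<Rightarrow> real" where
  "circuit_mean B c = (\<Sum>k<length c. real_of_ereal (B (c ! k) (c ! ((k + 1) mod length c)))) / real (length c)"

definition rho_max :: "('d::finite) mpmat \<Rightarrow> real" where
  "rho_max B = Max (circuit_mean B ` elem_circuits B)"

definition sup_norm :: "('d::finite \<Rightarrow> real) \<Rightarrow> real" where
  "sup_norm x = Max (range (\<lambda>i. \<bar>x i\<bar>))"

end

theory Submission
  imports Defs
begin


fun wt :: "('d::finite) mpmat \<Rightarrow> 'd list \<Rightarrow> real" where
  "wt B (x # y # r) = real_of_ereal (B x y) + wt B (y # r)"
| "wt B _ = 0"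

fun vw :: "('d::finite) mpmat \<Rightarrow> 'd list \<Rightarrow> bool" where
  "vw B (x # y # r) = (B x y \<noteq> -\<infinity> \<and> vw B (y # r))"
| "vw B _ = True"

lemma wt_append: "wt B (xs @ y # ys) = wt B (xs @ [y]) + wt B (y # ys)"
proof (induction xs)
  case (Cons x xs) then show ?case by (cases xs) auto
qed simp

lemma vw_append: "vw B (xs @ y # ys) = (vw B (xs @ [y]) \<and> vw B (y # ys))"
proof (induction xs)
  case (Cons x xs) then show ?case by (cases xs) auto
qed simp

lemma wt_nth: "wt B w = (\<Sum>k< length w - 1. real_of_ereal (B (w!k) (w!Suc k)))"
proof (induction B w rule: wt.induct)
  case (1 B x y r)
  have "(\<Sum>k< length (x#y#r) - 1. real_of_ereal (B ((x#y#r)!k) ((x#y#r)!Suc k)))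
      = real_of_ereal (B x y) + (\<Sum>k< length (y#r) - 1. real_of_ereal (B ((y#r)!k) ((y#r)!Suc k)))"
    by (simp add: sum.lessThan_Suc_shift del: sum.lessThan_Suc)
  then show ?case using 1 by simp
qed auto

lemma vw_nth: "vw B w = (\<forall>k< length w - 1. B (w!k) (w!Suc k) \<noteq> -\<infinity>)"
proof (induction B w rule: vw.induct)
  case (1 B x y r)
  show ?case using 1 by (auto simp: less_Suc_eq_0_disj)
qed auto

lemma closed_nth:
  assumes "c \<noteq> []" "k < length c"
  shows "(c @ [hd c]) ! k = c ! k" "(c @ [hd c]) ! Suc k = c ! ((k + 1) mod length c)"
proof -
  show "(c @ [hd c]) ! k = c ! k" using assms by (simp add: nth_append)
  show "(c @ [hd c]) ! Suc k = c ! ((k + 1) mod length c)"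
  proof (cases "Suc k < length c")
    case True then show ?thesis by (simp add: nth_append)
  next
    case False
    then have "Suc k = length c" using assms by simp
    then show ?thesis using assms by (simp add: nth_append hd_conv_nth)
  qed
qed

lemma wt_closed: "c \<noteq> [] \<Longrightarrow>
   wt B (c @ [hd c]) = (\<Sum>k<length c. real_of_ereal (B (c ! k) (c ! ((k + 1) mod length c))))"
  by (simp add: wt_nth closed_nth)

lemma vw_closed: "c \<noteq> [] \<Longrightarrow>
   vw B (c @ [hd c]) = (\<forall>k<length c. B (c ! k) (c ! ((k + 1) mod length c)) \<noteq> -\<infinity>)"
  by (simp add: vw_nth closed_nth)

lemma elem_circuit_iff: "c \<in> elem_circuits B \<longleftrightarrow> c \<noteq> [] \<and> distinct c \<and> vw B (c @ [hd c])"
  unfolding elem_circuits_def using vw_closed by blast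

lemma circuit_mean_wt: "c \<noteq> [] \<Longrightarrow> circuit_mean B c = wt B (c @ [hd c]) / real (length c)"
  unfolding circuit_mean_def by (simp add: wt_closed)

lemma distinct_len: "distinct (xs::('d::finite) list) \<Longrightarrow> length xs \<le> CARD('d)"
proof -
  assume "distinct xs"
  then have "length xs = card (set xs)" by (simp add: distinct_card)
  also have "\<dots> \<le> CARD('d)" by (rule card_mono) auto
  finally show ?thesis .
qed

lemma finite_elem_circuits: "finite (elem_circuits (B::('d::finite) mpmat))"
proof -
  have "elem_circuits B \<subseteq> {xs. set xs \<subseteq> UNIV \<and> length xs \<le> CARD('d)}"
    unfolding elem_circuits_def using distinct_len by blast
  moreover have "finite {xs::'d list. set xs \<subseteq> UNIV \<and> length xs \<le> CARD('d)}"
    by (rule finite_lists_length_le) simp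
  ultimately show ?thesis by (rule finite_subset)
qed

lemma mp_op_ge:
  assumes "mp_matrix B" "B i k \<noteq> -\<infinity>"
  shows "real_of_ereal (B i k) + y k \<le> mp_op B y i"
proof -
  let ?S = "range (\<lambda>j. B i j + ereal (y j))"
  have fin: "finite ?S" by simp
  have "B i k + ereal (y k) \<le> Max ?S" by (rule Max_ge[OF fin]) auto
  moreover have "Max ?S \<in> ?S" by (rule Max_in[OF fin]) auto
  then obtain j where j: "Max ?S = B i j + ereal (y j)" by blast
  moreover have "B i j \<noteq> \<infinity>" "B i k \<noteq> \<infinity>" using assms(1) unfolding mp_matrix_def by auto
  ultimately show ?thesis using assms(2) unfolding mp_op_def
    by (cases "B i k"; cases "B i j") auto
qed

lemma mp_op_ex:
  assumes "mp_matrix B"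
  shows "\<exists>k. B i k \<noteq> -\<infinity> \<and> mp_op B y i = real_of_ereal (B i k) + y k"
proof -
  let ?S = "range (\<lambda>j. B i j + ereal (y j))"
  have fin: "finite ?S" by simp
  obtain k0 where k0: "B i k0 \<noteq> -\<infinity>" using assms unfolding mp_matrix_def by blast
  have "B i k0 + ereal (y k0) \<le> Max ?S" by (rule Max_ge[OF fin]) auto
  moreover have "Max ?S \<in> ?S" by (rule Max_in[OF fin]) auto
  then obtain j where j: "Max ?S = B i j + ereal (y j)" by blast
  moreover have "B i j \<noteq> \<infinity>" "B i k0 \<noteq> \<infinity>" using assms(1) unfolding mp_matrix_def by auto
  ultimately show ?thesis using k0 unfolding mp_op_def
    by (intro exI[of _ j]; cases "B i k0"; cases "B i j") auto
qed

lemma mp_op_mono: "mp_matrix B \<Longrightarrow> (\<And>j. y j \<le> z j) \<Longrightarrow> mp_op B y i \<le> mp_op B z i"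
  by (metis add_left_mono mp_op_ex mp_op_ge order_trans)

lemma mp_op_shift: "mp_matrix B \<Longrightarrow> mp_op B (\<lambda>j. y j + c) = (\<lambda>i. mp_op B y i + c)"
proof
  fix i assume B: "mp_matrix B"
  obtain k where k: "B i k \<noteq> -\<infinity>" "mp_op B y i = real_of_ereal (B i k) + y k" using mp_op_ex[OF B] by blast
  obtain k' where k': "B i k' \<noteq> -\<infinity>" "mp_op B (\<lambda>j. y j + c) i = real_of_ereal (B i k') + (y k' + c)"
    using mp_op_ex[OF B, of i "\<lambda>j. y j + c"] by blast
  have "real_of_ereal (B i k') + y k' \<le> mp_op B y i" by (rule mp_op_ge[OF B k'(1)])
  moreover have "real_of_ereal (B i k) + (y k + c) \<le> mp_op B (\<lambda>j. y j + c) i" by (rule mp_op_ge[OF B k(1)])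
  ultimately show "mp_op B (\<lambda>j. y j + c) i = mp_op B y i + c" using k k' by linarith
qed



context fixes B :: "('d::finite) mpmat" assumes B: "mp_matrix B"
begin

lemma pow_mono: "(\<And>j. y j \<le> z j) \<Longrightarrow> (mp_op B ^^ n) y i \<le> (mp_op B ^^ n) z i"
proof (induction n arbitrary: i)
  case (Suc n) then show ?case by (simp add: mp_op_mono[OF B])
qed simp

lemma pow_shift: "(mp_op B ^^ n) (\<lambda>j. y j + c) = (\<lambda>i. (mp_op B ^^ n) y i + c)"
  by (induction n) (simp_all add: mp_op_shift[OF B])

lemma walk_lb: "vw B w \<Longrightarrow> w \<noteq> [] \<Longrightarrow> wt B w + y (last w) \<le> (mp_op B ^^ (length w - 1)) y (hd w)"
proof (induction w)
  case (Cons x w)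
  show ?case
  proof (cases w)
    case Nil then show ?thesis by simp
  next
    case (Cons z r)
    have ih: "wt B w + y (last w) \<le> (mp_op B ^^ (length w - 1)) y z"
      using Cons.IH Cons.prems \<open>w = z # r\<close> by simp
    have arc: "B x z \<noteq> -\<infinity>" using Cons.prems \<open>w = z # r\<close> by simp
    have "wt B (x # w) + y (last (x # w)) = real_of_ereal (B x z) + (wt B w + y (last w))"
      using \<open>w = z # r\<close> by simp
    also have "\<dots> \<le> real_of_ereal (B x z) + (mp_op B ^^ (length w - 1)) y z" using ih by simp
    also have "\<dots> \<le> mp_op B ((mp_op B ^^ (length w - 1)) y) x" by (rule mp_op_ge[OF B arc])
    also have "\<dots> = (mp_op B ^^ (length (x # w) - 1)) y (hd (x # w))"
      using \<open>w = z # r\<close> by simp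
    finally show ?thesis .
  qed
qed simp

lemma walk_ex: "\<exists>w. vw B w \<and> length w = Suc n \<and> hd w = j \<and> (mp_op B ^^ n) y j = wt B w + y (last w)"
proof (induction n arbitrary: j)
  case 0 show ?case by (intro exI[of _ "[j]"]) simp
next
  case (Suc n)
  obtain k where k: "B j k \<noteq> -\<infinity>" "mp_op B ((mp_op B ^^ n) y) j = real_of_ereal (B j k) + (mp_op B ^^ n) y k"
    using mp_op_ex[OF B] by blast
  obtain w where w: "vw B w" "length w = Suc n" "hd w = k" "(mp_op B ^^ n) y k = wt B w + y (last w)"
    using Suc.IH by blast
  then obtain r where r: "w = k # r" by (cases w) auto
  show ?case
    by (intro exI[of _ "j # w"]) (use k w r in simp)
qed

definition Mx :: real where "Mx = Max (range (\<lambda>(i,j). \<bar>real_of_ereal (B i j)\<bar>))"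

lemma Mx_ge: "\<bar>real_of_ereal (B i j)\<bar> \<le> Mx"
  unfolding Mx_def by (rule Max_ge) auto

lemma Mx_nonneg: "0 \<le> Mx" using Mx_ge[of undefined undefined] abs_ge_zero order_trans by blast

lemma wt_le_Mx: "wt B w \<le> real (length w - 1) * Mx"
proof (induction w)
  case (Cons x w)
  show ?case
  proof (cases w)
    case (Cons y r)
    have "wt B (x # w) = real_of_ereal (B x y) + wt B w" using Cons by simp
    also have "\<dots> \<le> Mx + real (length w - 1) * Mx"
      using Cons.IH Mx_ge[of x y] by linarith
    also have "\<dots> = real (length (x # w) - 1) * Mx" using Cons by (simp add: algebra_simps)
    finally show ?thesis .
  qed simp
qed simp


lemma closed_walk_bound:
  assumes H: "\<And>c. c \<in> elem_circuits B \<Longrightarrow> set c \<subseteq> V \<Longrightarrow> circuit_mean B c \<le> r - \<delta>"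
    and d0: "0 \<le> \<delta>"
  shows "vw B (x # ys @ [x]) \<Longrightarrow> set (x # ys) \<subseteq> V \<Longrightarrow> wt B (x # ys @ [x]) \<le> r * real (length ys + 1) - \<delta>"
proof (induction "length ys" arbitrary: x ys rule: less_induct)
  case less
  show ?case
  proof (cases "distinct (x # ys)")
    case True
    have c: "x # ys \<in> elem_circuits B" unfolding elem_circuit_iff using True less.prems(1) by simp
    have cm: "circuit_mean B (x # ys) = wt B (x # ys @ [x]) / real (length ys + 1)"
      using circuit_mean_wt[of "x # ys" B] by simp
    have "wt B (x # ys @ [x]) / real (length ys + 1) \<le> r - \<delta>" using H[OF c less.prems(2)] cm by simp
    then have "wt B (x # ys @ [x]) \<le> (r - \<delta>) * real (length ys + 1)"
      by (simp add: divide_le_eq)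
    also have "\<dots> = r * real (length ys + 1) - \<delta> * real (length ys + 1)" by (simp add: algebra_simps)
    also have "\<dots> \<le> r * real (length ys + 1) - \<delta>" using d0 by (simp add: algebra_simps)
    finally show ?thesis .
  next
    case False
    obtain as y bs cs where dec: "x # ys = as @ [y] @ bs @ [y] @ cs" using not_distinct_decomp[OF False] by blast
    have W: "x # ys @ [x] = as @ y # (bs @ y # (cs @ [x]))" using dec by (metis append.assoc append_Cons append_Nil)
    have wtW: "wt B (x # ys @ [x]) = wt B (as @ [y]) + wt B (y # bs @ [y]) + wt B (y # cs @ [x])"
      unfolding W wt_append[of B as y "bs @ y # (cs @ [x])"] using wt_append[of B "y # bs" y "cs @ [x]"] by simp
    have vwW: "vw B (as @ [y]) \<and> vw B (y # bs @ [y]) \<and> vw B (y # cs @ [x])"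
      using less.prems(1) unfolding W vw_append[of B as y "bs @ y # (cs @ [x])"] using vw_append[of B "y # bs" y "cs @ [x]"] by simp
    have len: "length ys + 1 = length as + length bs + length cs + 2" using arg_cong[OF dec, of length] by simp
    have setV: "set as \<subseteq> V" "y \<in> V" "set bs \<subseteq> V" "set cs \<subseteq> V" using less.prems(2) dec by auto
    have c1: "wt B (y # bs @ [y]) \<le> r * real (length bs + 1) - \<delta>"
      using less.hyps[of bs y] len vwW setV by simp
    obtain zs where zs: "as @ y # cs @ [x] = x # zs @ [x]" "length zs = length as + length cs"
      "set (x # zs) \<subseteq> V"
    proof (cases as)
      case Nil
      then have "y = x" using dec by simp
      then show ?thesis using that[of cs] Nil setV by simp
    next
      case (Cons a as')
      then have "a = x" using dec by simp
      then show ?thesis using that[of "as' @ y # cs"] Cons setV by simp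
    qed
    have wt2: "wt B (x # zs @ [x]) = wt B (as @ [y]) + wt B (y # cs @ [x])"
      using zs(1) wt_append[of B as y "cs @ [x]"] by (metis append_Cons)
    have vw2: "vw B (x # zs @ [x])"
      using zs(1) vw_append[of B as y "cs @ [x]"] vwW by (metis append_Cons)
    have c2: "wt B (x # zs @ [x]) \<le> r * real (length zs + 1) - \<delta>"
      using less.hyps[of zs x] zs len vw2 by simp
    have "real (length ys + 1) = real (length bs + 1) + real (length zs + 1)" using len zs by simp
    then have "r * real (length ys + 1) = r * real (length bs + 1) + r * real (length zs + 1)"
      by (simp add: algebra_simps)
    then show ?thesis using wtW wt2 c1 c2 d0 by linarith
  qed
qed


lemma frac_le: "0 \<le> \<delta> \<Longrightarrow> real m \<le> D \<Longrightarrow> 0 < D \<Longrightarrow> \<delta> * real m / D \<le> \<delta>"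
proof -
  assume a: "0 \<le> \<delta>" "real m \<le> D" "0 < D"
  have "real m / D \<le> 1" using a by simp
  then have "\<delta> * (real m / D) \<le> \<delta> * 1" using a(1) mult_left_mono by blast
  then show ?thesis by simp
qed

lemma walk_bound:
  assumes H: "\<And>c. c \<in> elem_circuits B \<Longrightarrow> set c \<subseteq> V \<Longrightarrow> circuit_mean B c \<le> r - \<delta>"
    and d0: "0 \<le> \<delta>"
  shows "vw B w \<Longrightarrow> w \<noteq> [] \<Longrightarrow> set w \<subseteq> V \<Longrightarrow>
    wt B w \<le> r * real (length w - 1) + real CARD('d) * (Mx + \<bar>r\<bar>) + \<delta> - \<delta> * real (length w - 1) / real CARD('d)"
proof (induction "length w" arbitrary: w rule: less_induct)
  case less
  define D where "D = real CARD('d)"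
  have Dpos: "D > 0" unfolding D_def by simp
  define n where "n = length w - 1"
  show ?case
  proof (cases "n < CARD('d)")
    case True
    have a1: "wt B w \<le> real n * Mx" using wt_le_Mx n_def by simp
    have a2: "real n * (Mx - r) \<le> real n * (Mx + \<bar>r\<bar>)" by (rule mult_left_mono) auto
    have a3: "real n * (Mx + \<bar>r\<bar>) \<le> D * (Mx + \<bar>r\<bar>)"
      by (rule mult_right_mono) (use True Mx_nonneg D_def in auto)
    have a4: "\<delta> * real n / D \<le> \<delta>" by (rule frac_le) (use d0 True Dpos D_def in auto)
    have "real n * Mx = r * real n + real n * (Mx - r)" by (simp add: algebra_simps)
    then have "wt B w \<le> r * real n + D * (Mx + \<bar>r\<bar>) + \<delta> - \<delta> * real n / D"
      using a1 a2 a3 a4 by argo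
    then show ?thesis unfolding n_def D_def by simp
  next
    case False
    let ?p = "take (Suc CARD('d)) w"
    have "length w \<ge> Suc CARD('d)" using False n_def less.prems(2) by (cases w) auto
    then have lp: "length ?p = Suc CARD('d)" by simp
    then have "\<not> distinct ?p" using distinct_len[of ?p] by auto
    then obtain as y bs cs where dec: "?p = as @ [y] @ bs @ [y] @ cs" using not_distinct_decomp by blast
    define q where "q = drop (Suc CARD('d)) w"
    have W: "w = as @ y # (bs @ y # (cs @ q))"
      using dec append_take_drop_id[of "Suc CARD('d)" w] q_def by (metis append.assoc append_Cons append_Nil)
    define w' where "w' = as @ y # (cs @ q)"
    have wtW: "wt B w = wt B (as @ [y]) + wt B (y # bs @ [y]) + wt B (y # cs @ q)"
      using W wt_append[of B as y "bs @ y # (cs @ q)"] wt_append[of B "y # bs" y "cs @ q"] by simp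
    have vwW: "vw B (as @ [y]) \<and> vw B (y # bs @ [y]) \<and> vw B (y # cs @ q)"
      using less.prems(1) W vw_append[of B as y "bs @ y # (cs @ q)"] vw_append[of B "y # bs" y "cs @ q"] by simp
    have wt': "wt B w' = wt B (as @ [y]) + wt B (y # cs @ q)"
      unfolding w'_def by (rule wt_append)
    have vw': "vw B w'" unfolding w'_def using vw_append[of B as y "cs @ q"] vwW by simp
    have l1: "length ?p = length as + length bs + length cs + 2" using dec by simp
    have l2: "length w = length as + length bs + length cs + length q + 2" using W by simp
    define m where "m = length bs + 1"
    define n' where "n' = length w' - 1"
    have nn: "n = n' + m" unfolding n_def n'_def m_def w'_def using l2 by simp
    have mD: "real m \<le> D" using lp l1 unfolding m_def D_def by simp
    have setV: "set as \<subseteq> V" "y \<in> V" "set bs \<subseteq> V" "set cs \<subseteq> V" "set q \<subseteq> V"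
      using less.prems(3) W by auto
    have ih: "wt B w' \<le> r * real n' + D * (Mx + \<bar>r\<bar>) + \<delta> - \<delta> * real n' / D"
      using less.hyps[of w'] vw' setV l2 unfolding n'_def D_def w'_def by simp
    have cyc: "wt B (y # bs @ [y]) \<le> r * real m - \<delta>"
      using closed_walk_bound[OF H d0, where x=y and ys=bs] vwW setV unfolding m_def by simp
    have e1: "\<delta> * real n / D = \<delta> * real n' / D + \<delta> * real m / D"
      using nn by (simp add: add_divide_distrib distrib_left)
    have e2: "\<delta> * real m / D \<le> \<delta>" by (rule frac_le[OF d0 mD Dpos])
    have e3: "r * real n = r * real n' + r * real m" using nn by (simp add: distrib_left)
    have "wt B w \<le> r * real n + D * (Mx + \<bar>r\<bar>) + \<delta> - \<delta> * real n / D"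
      using wtW wt' ih cyc e1 e2 e3 by linarith
    then show ?thesis unfolding n_def D_def by simp
  qed
qed


lemma mean_le_rho: "c \<in> elem_circuits B \<Longrightarrow> circuit_mean B c \<le> rho_max B"
  unfolding rho_max_def by (rule Max_ge) (use finite_elem_circuits in auto)

lemma elem_circuits_ne: "elem_circuits B \<noteq> {}"
proof
  assume E: "elem_circuits B = {}"
  obtain w where w: "vw B w" "length w = Suc CARD('d)"
    using walk_ex[of "CARD('d)" undefined "\<lambda>_. 0"] by blast
  then have "\<not> distinct w" using distinct_len[of w] by auto
  then obtain as y bs cs where dec: "w = as @ [y] @ bs @ [y] @ cs" using not_distinct_decomp by blast
  have vc: "vw B (y # bs @ [y])"
    using w(1) dec vw_append[of B as y "bs @ y # cs"] vw_append[of B "y # bs" y cs] by simp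
  let ?m = "real (length bs + 1)"
  have "wt B (y # bs @ [y]) \<le> ((wt B (y # bs @ [y]) - 1) / ?m) * ?m - 0"
    by (rule closed_walk_bound[where V=UNIV and \<delta>=0]) (use E vc in auto)
  then show False by simp
qed

definition crit :: "'d \<Rightarrow> bool" where
  "crit c \<longleftrightarrow> (\<exists>zs. vw B (c # zs @ [c]) \<and> wt B (c # zs @ [c]) = rho_max B * real (length zs + 1)
      \<and> length zs + 1 \<le> CARD('d))"

lemma crit_ex: "\<exists>i. crit i"
proof -
  have "rho_max B \<in> circuit_mean B ` elem_circuits B" unfolding rho_max_def
    by (rule Max_in) (use finite_elem_circuits elem_circuits_ne in auto)
  then obtain g where g: "g \<in> elem_circuits B" "circuit_mean B g = rho_max B" by auto
  then obtain i zs where gi: "g = i # zs" unfolding elem_circuit_iff by (cases g) auto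
  have "vw B (i # zs @ [i])" using g(1) gi unfolding elem_circuit_iff by simp
  moreover have "wt B (i # zs @ [i]) = rho_max B * real (length zs + 1)"
    using circuit_mean_wt[of g B] g(2) gi by (simp add: field_simps)
  moreover have "length zs + 1 \<le> CARD('d)" using distinct_len[of g] g(1) gi unfolding elem_circuit_iff by simp
  ultimately show ?thesis unfolding crit_def by blast
qed

lemma crit_step: "crit c \<Longrightarrow> \<exists>m\<ge>1. m \<le> CARD('d) \<and> (\<forall>y. real m * rho_max B + y c \<le> (mp_op B ^^ m) y c)"
proof -
  assume "crit c"
  then obtain zs where zs: "vw B (c # zs @ [c])" "wt B (c # zs @ [c]) = rho_max B * real (length zs + 1)"
      "length zs + 1 \<le> CARD('d)" unfolding crit_def by blast
  have "\<forall>y. real (length zs + 1) * rho_max B + y c \<le> (mp_op B ^^ (length zs + 1)) y c"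
    using walk_lb[OF zs(1)] zs(2) by (simp add: mult.commute)
  then show ?thesis using zs(3) by (intro exI[of _ "length zs + 1"]) auto
qed

lemma pow_iter: "(\<And>y. real m * rho_max B + y c \<le> (mp_op B ^^ m) y c) \<Longrightarrow>
   real (k * m) * rho_max B + y c \<le> (mp_op B ^^ (k * m)) y c"
proof (induction k arbitrary: y)
  case (Suc k)
  have "(mp_op B ^^ (Suc k * m)) y c = (mp_op B ^^ m) ((mp_op B ^^ (k * m)) y) c"
    by (simp add: funpow_add)
  moreover have "real m * rho_max B + (mp_op B ^^ (k * m)) y c \<le> (mp_op B ^^ m) ((mp_op B ^^ (k * m)) y) c"
    by (rule Suc.prems)
  moreover have "real (k * m) * rho_max B + y c \<le> (mp_op B ^^ (k * m)) y c" by (rule Suc.IH[OF Suc.prems])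
  moreover have "real (Suc k * m) * rho_max B = real m * rho_max B + real (k * m) * rho_max B"
    by (simp add: algebra_simps)
  ultimately show ?case by linarith
qed simp

lemma crit_L: "crit c \<Longrightarrow> real (fact CARD('d)) * rho_max B + y c \<le> (mp_op B ^^ (fact CARD('d))) y c"
proof -
  assume "crit c"
  then obtain m where m: "m \<ge> 1" "m \<le> CARD('d)" "\<And>y. real m * rho_max B + y c \<le> (mp_op B ^^ m) y c"
    using crit_step by blast
  have "m dvd fact CARD('d)" using m by (simp add: dvd_fact)
  then have e: "fact CARD('d) = (fact CARD('d) div m) * m" by simp
  have "real ((fact CARD('d) div m) * m) * rho_max B + y c \<le> (mp_op B ^^ ((fact CARD('d) div m) * m)) y c"
    by (rule pow_iter[OF m(3)])
  then show ?thesis using e by simp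
qed

lemma orbit_upper: "\<exists>C. \<forall>n j. (mp_op B ^^ n) v j \<le> real n * rho_max B + C"
proof -
  define Vm where "Vm = Max (range (\<lambda>j. \<bar>v j\<bar>))"
  have Vm: "v j \<le> Vm" for j
  proof -
    have "\<bar>v j\<bar> \<le> Vm" unfolding Vm_def by (rule Max_ge) auto
    then show ?thesis by linarith
  qed
  define C where "C = real CARD('d) * (Mx + \<bar>rho_max B\<bar>) + Vm"
  have "(mp_op B ^^ n) v j \<le> real n * rho_max B + C" for n j
  proof -
    obtain w where w: "vw B w" "length w = Suc n" "hd w = j" "(mp_op B ^^ n) v j = wt B w + v (last w)"
      using walk_ex by blast
    have "wt B w \<le> rho_max B * real (length w - 1) + real CARD('d) * (Mx + \<bar>rho_max B\<bar>) + 0 - 0 * real (length w - 1) / real CARD('d)"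
      by (rule walk_bound[where V=UNIV]) (use w mean_le_rho in auto)
    then show ?thesis using w Vm[of "last w"] unfolding C_def by (simp add: mult.commute)
  qed
  then show ?thesis by blast
qed

lemma sc_walk: "(j, i) \<in> {(p, q). B p q \<noteq> -\<infinity>}\<^sup>* \<Longrightarrow> \<exists>p. vw B p \<and> p \<noteq> [] \<and> hd p = j \<and> last p = i"
proof (induction rule: converse_rtrancl_induct)
  case base show ?case by (intro exI[of _ "[i]"]) simp
next
  case (step j k)
  then obtain p where p: "vw B p" "p \<noteq> []" "hd p = k" "last p = i" by blast
  then obtain r where "p = k # r" by (cases p) auto
  then show ?case using p step(1) by (intro exI[of _ "j # p"]) auto
qed


lemma orbit_lower:
  assumes sc: "strongly_connected B"
  shows "\<exists>N K. \<forall>n\<ge>N. \<forall>j. real n * rho_max B - K \<le> (mp_op B ^^ n) v j"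
proof -
  obtain i where i: "crit i" using crit_ex by blast
  obtain m where m: "m \<ge> 1" "\<And>y. real m * rho_max B + y i \<le> (mp_op B ^^ m) y i"
    using crit_step[OF i] by blast
  define K2 where "K2 = Max ((\<lambda>(s,k). \<bar>(mp_op B ^^ s) v k\<bar>) ` ({..<m} \<times> UNIV))"
  have K2: "-K2 \<le> (mp_op B ^^ s) v k" if "s < m" for s k
  proof -
    have "\<bar>(mp_op B ^^ s) v k\<bar> \<le> K2" unfolding K2_def by (rule Max_ge) (use that in auto)
    then show ?thesis by linarith
  qed
  have "\<exists>P K. \<forall>n\<ge>P. real n * rho_max B - K \<le> (mp_op B ^^ n) v j" for j
  proof -
    have "(j, i) \<in> {(p, q). B p q \<noteq> -\<infinity>}\<^sup>*" using sc unfolding strongly_connected_def by blast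
    then obtain p where p: "vw B p" "p \<noteq> []" "hd p = j" "last p = i" using sc_walk by blast
    define P where "P = length p - 1"
    define K where "K = \<bar>wt B p\<bar> + real (P + m) * \<bar>rho_max B\<bar> + K2"
    have "real n * rho_max B - K \<le> (mp_op B ^^ n) v j" if n: "n \<ge> P" for n
    proof -
      define q where "q = (n - P) div m"
      define s where "s = (n - P) mod m"
      have ns: "n = P + (q * m + s)" using n unfolding q_def s_def by simp
      have sm: "s < m" unfolding s_def using m(1) by simp
      have e: "(mp_op B ^^ n) v j = (mp_op B ^^ P) ((mp_op B ^^ (q*m)) ((mp_op B ^^ s) v)) j"
        unfolding ns by (simp add: funpow_add)
      have l1: "wt B p + (mp_op B ^^ (q*m)) ((mp_op B ^^ s) v) i \<le> (mp_op B ^^ P) ((mp_op B ^^ (q*m)) ((mp_op B ^^ s) v)) j"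
        using walk_lb[OF p(1) p(2), of "(mp_op B ^^ (q*m)) ((mp_op B ^^ s) v)"] p unfolding P_def by simp
      have l2: "real (q*m) * rho_max B + (mp_op B ^^ s) v i \<le> (mp_op B ^^ (q*m)) ((mp_op B ^^ s) v) i"
        by (rule pow_iter[OF m(2)])
      have l3: "-K2 \<le> (mp_op B ^^ s) v i" by (rule K2[OF sm])
      have l4: "real n * rho_max B = real (q*m) * rho_max B + real (P + s) * rho_max B"
        by (subst ns) (simp add: algebra_simps)
      have "real (P + s) * rho_max B \<le> real (P + s) * \<bar>rho_max B\<bar>" by (rule mult_left_mono) auto
      also have "\<dots> \<le> real (P + m) * \<bar>rho_max B\<bar>" by (rule mult_right_mono) (use sm in auto)
      finally have l5: "real (P + s) * rho_max B \<le> real (P + m) * \<bar>rho_max B\<bar>" .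
      have l6: "- \<bar>wt B p\<bar> \<le> wt B p" by simp
      show ?thesis using e l1 l2 l3 l4 l5 l6 unfolding K_def by linarith
    qed
    then show ?thesis by blast
  qed
  then obtain Pf Kf where PK: "\<And>j n. n \<ge> Pf j \<Longrightarrow> real n * rho_max B - Kf j \<le> (mp_op B ^^ n) v j"
    by metis
  define N where "N = Max (range Pf)"
  define K where "K = Max (range Kf)"
  show ?thesis
  proof (intro exI allI impI)
    fix n j assume nN: "N \<le> n"
    have "Pf j \<le> N" "Kf j \<le> K" unfolding N_def K_def by (auto intro: Max_ge)
    then show "real n * rho_max B - K \<le> (mp_op B ^^ n) v j" using PK[of j n] nN by fastforce
  qed
qed

lemma orbit_mono:
  assumes sc: "strongly_connected B"
  shows "\<exists>N. \<forall>n\<ge>N. \<forall>j. (mp_op B ^^ n) v j + real (fact CARD('d)) * rho_max B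
            \<le> (mp_op B ^^ (n + fact CARD('d))) v j"
proof -
  obtain N0 K where low: "\<And>n j. n \<ge> N0 \<Longrightarrow> real n * rho_max B - K \<le> (mp_op B ^^ n) v j"
    using orbit_lower[OF sc] by blast
  define V where "V = {c. \<not> crit c}"
  define G where "G = (\<lambda>c. rho_max B - circuit_mean B c) ` {c \<in> elem_circuits B. set c \<subseteq> V}"
  define \<delta> where "\<delta> = (if G = {} then 1 else Min G)"
  have Gpos: "g > 0" if "g \<in> G" for g
  proof -
    obtain c where c: "c \<in> elem_circuits B" "set c \<subseteq> V" "g = rho_max B - circuit_mean B c"
      using \<open>g \<in> G\<close> unfolding G_def by blast
    have "circuit_mean B c \<noteq> rho_max B"
    proof
      assume eq: "circuit_mean B c = rho_max B"
      obtain x zs where xz: "c = x # zs" using c(1) unfolding elem_circuit_iff by (cases c) auto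
      have "vw B (x # zs @ [x])" using c(1) xz unfolding elem_circuit_iff by simp
      moreover have "wt B (x # zs @ [x]) = rho_max B * real (length zs + 1)"
        using circuit_mean_wt[of c B] eq xz by (simp add: field_simps)
      moreover have "length zs + 1 \<le> CARD('d)" using distinct_len[of c] c(1) xz unfolding elem_circuit_iff by simp
      ultimately have "crit x" unfolding crit_def by blast
      moreover have "x \<in> V" using c(2) xz by auto
      ultimately show False unfolding V_def by auto
    qed
    then show "g > 0" using mean_le_rho[OF c(1)] c(3) by linarith
  qed
  have finG: "finite G" unfolding G_def by (rule finite_imageI) (use finite_elem_circuits[of B] in simp)
  have dpos: "\<delta> > 0"
  proof (cases "G = {}")
    case False
    then have "Min G \<in> G" using finG by (intro Min_in) auto
    then show ?thesis using Gpos False unfolding \<delta>_def by auto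
  qed (simp add: \<delta>_def)
  have H: "circuit_mean B c \<le> rho_max B - \<delta>" if "c \<in> elem_circuits B" "set c \<subseteq> V" for c
  proof -
    have g: "rho_max B - circuit_mean B c \<in> G" unfolding G_def using that by auto
    then have "G \<noteq> {}" by auto
    then have "\<delta> = Min G" unfolding \<delta>_def by simp
    then have "\<delta> \<le> rho_max B - circuit_mean B c" using Min_le[OF finG g] by simp
    then show ?thesis by simp
  qed
  define Vm where "Vm = Max (range (\<lambda>j. \<bar>v j\<bar>))"
  have Vm: "v j \<le> Vm" for j
  proof -
    have "\<bar>v j\<bar> \<le> Vm" unfolding Vm_def by (rule Max_ge) auto
    then show ?thesis by linarith
  qed
  define D where "D = real CARD('d)"
  have Dpos: "D > 0" unfolding D_def by simp
  define X where "X = D * (Mx + \<bar>rho_max B\<bar>) + \<delta> + K + Vm"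
  obtain N1 :: nat where N1: "D * X / \<delta> < real N1" by (meson reals_Archimedean2)
  define N where "N = max N0 N1"
  show ?thesis
  proof (intro exI allI impI)
    fix n j assume n: "N \<le> n"
    obtain w where w: "vw B w" "length w = Suc n" "hd w = j" "(mp_op B ^^ n) v j = wt B w + v (last w)"
      using walk_ex by blast
    have "\<exists>c \<in> set w. crit c"
    proof (rule ccontr)
      assume "\<not> ?thesis"
      then have sV: "set w \<subseteq> V" unfolding V_def by auto
      have ub: "wt B w \<le> rho_max B * real n + D * (Mx + \<bar>rho_max B\<bar>) + \<delta> - \<delta> * real n / D"
        using walk_bound[where V=V and r="rho_max B" and \<delta>=\<delta> and w=w, OF H less_imp_le[OF dpos]] w sV unfolding D_def
        by (metis Zero_not_Suc diff_Suc_1 list.size(3))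
      have lb: "real n * rho_max B - K \<le> wt B w + v (last w)" using low[of n j] n w(4) unfolding N_def by simp
      have "\<delta> * real n / D \<le> X" using ub lb Vm[of "last w"] unfolding X_def by (simp add: mult.commute)
      moreover have "X < \<delta> * real n / D"
      proof -
        have "D * X / \<delta> < real n" using N1 n unfolding N_def by linarith
        then have "D * X < real n * \<delta>" using dpos by (simp add: divide_less_eq)
        then have "X < real n * \<delta> / D" using Dpos by (simp add: less_divide_eq mult.commute)
        then show ?thesis by (simp add: mult.commute)
      qed
      ultimately show False by linarith
    qed
    then obtain c where c: "c \<in> set w" "crit c" by blast
    obtain xs ys where sp: "w = xs @ c # ys" using split_list[OF c(1)] by blast
    let ?L = "fact CARD('d) :: nat"
    have lens: "n = length xs + length ys" using w(2) sp by simp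
    have wtw: "wt B w = wt B (xs @ [c]) + wt B (c # ys)" using sp wt_append by simp
    have vws: "vw B (xs @ [c])" "vw B (c # ys)" using w(1) sp vw_append by auto
    define z where "z = (mp_op B ^^ (length ys)) v"
    define z' where "z' = (mp_op B ^^ ?L) z"
    have "n + ?L = length xs + (?L + length ys)" using lens by simp
    then have e: "(mp_op B ^^ (n + ?L)) v j = (mp_op B ^^ (length xs)) z' j"
      unfolding z'_def z_def by (simp only: funpow_add comp_apply)
    have hd: "hd (xs @ [c]) = j" using w(3) sp by (cases xs) auto
    have a1: "wt B (xs @ [c]) + z' c \<le> (mp_op B ^^ (length xs)) z' j"
      using walk_lb[OF vws(1), of z'] hd by simp
    have a2: "real ?L * rho_max B + z c \<le> z' c" using crit_L[OF c(2)] unfolding z'_def by simp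
    have a3: "wt B (c # ys) + v (last w) \<le> z c" using walk_lb[OF vws(2), of v] sp unfolding z_def by simp
    show "(mp_op B ^^ n) v j + real ?L * rho_max B \<le> (mp_op B ^^ (n + ?L)) v j"
      using w(4) e a1 a2 a3 wtw by linarith
  qed
qed

end


lemma disc_pos:
  fixes c b :: real
  assumes b: "b > 0" and nz: "\<forall>k::int. c + b * of_int k \<noteq> 0"
  shows "\<exists>s>0. \<forall>k::int. 0 \<le> c + b * of_int k \<longrightarrow> s \<le> c + b * of_int k"
proof -
  define k0 where "k0 = \<lceil>- c / b\<rceil>"
  have "- c / b \<le> of_int k0" unfolding k0_def by simp
  then have "- c \<le> b * of_int k0" using b by (metis mult.commute pos_divide_le_eq)
  then have "0 \<le> c + b * of_int k0" by simp
  moreover have "c + b * of_int k0 \<noteq> 0" using nz by blast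
  ultimately have pos: "0 < c + b * of_int k0" by simp
  have "c + b * of_int k0 \<le> c + b * of_int k" if "0 \<le> c + b * of_int k" for k
  proof -
    have "- c \<le> b * of_int k" using that by simp
    then have "- c / b \<le> of_int k" using b by (metis mult.commute pos_divide_le_eq)
    then have "k0 \<le> k" unfolding k0_def by (simp add: ceiling_le_iff)
    then show ?thesis using b by simp
  qed
  then show ?thesis using pos by blast
qed

lemma disc:
  fixes c b :: real
  assumes nz: "\<forall>k::int. c + b * of_int k \<noteq> 0"
  shows "\<exists>s>0. \<forall>k::int. 0 \<le> c + b * of_int k \<longrightarrow> s \<le> c + b * of_int k"
proof (cases "b > 0")
  case True then show ?thesis using disc_pos nz by blast
next
  case False
  show ?thesis
  proof (cases "b = 0")
    case True
    then have "c \<noteq> 0" using nz by auto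
    then show ?thesis using True
      by (intro exI[of _ "\<bar>c\<bar>"]) auto
  next
    case False
    then have b': "- b > 0" using \<open>\<not> b > 0\<close> by simp
    have nz': "\<forall>k::int. c + (- b) * of_int k \<noteq> 0"
    proof
      fix k :: int
      have "c + (- b) * of_int k = c + b * of_int (- k)" by simp
      then show "c + (- b) * of_int k \<noteq> 0" using nz by metis
    qed
    obtain s where s: "s > 0" "\<forall>k::int. 0 \<le> c + (- b) * of_int k \<longrightarrow> s \<le> c + (- b) * of_int k"
      using disc_pos[OF b' nz'] by blast
    have "s \<le> c + b * of_int k" if "0 \<le> c + b * of_int k" for k :: int
      using s(2)[rule_format, of "- k"] that by simp
    then show ?thesis using s(1) by blast
  qed
qed

lemma topical_mono: "topical \<theta> \<Longrightarrow> (\<And>j. x j \<le> y j) \<Longrightarrow> \<theta> x i \<le> \<theta> y i"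
  unfolding topical_def mono_def by (simp add: le_fun_def)

lemma topical_shift: "topical \<theta> \<Longrightarrow> \<theta> (\<lambda>j. x j + c) i = \<theta> x i + c"
  unfolding topical_def by metis

context fixes B :: "('d::finite) mpmat" assumes B: "mp_matrix B"
begin

lemma main_alg:
  assumes sc: "strongly_connected B" and th: "topical \<theta>"
    and ar: "\<And>n. \<exists>k::int. \<theta> ((mp_op B ^^ Suc n) v) i0 - \<theta> ((mp_op B ^^ n) v) i0 = a + b * of_int k"
  shows "\<exists>k::int. real (fact CARD('d)) * (a - rho_max B) + b * of_int k = 0"
proof (rule ccontr)
  assume nz0: "\<not> ?thesis"
  define L where "L = (fact CARD('d) :: nat)"
  define \<rho> where "\<rho> = rho_max B"
  define c where "c = real L * (a - \<rho>)"
  have nz: "\<forall>k::int. c + b * of_int k \<noteq> 0" using nz0 unfolding c_def L_def \<rho>_def by blast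
  obtain s where s: "s > 0" "\<And>k::int. 0 \<le> c + b * of_int k \<Longrightarrow> s \<le> c + b * of_int k"
    using disc[OF nz] by blast
  have tele: "\<exists>K::int. \<theta> ((mp_op B ^^ (n + q)) v) i0 - \<theta> ((mp_op B ^^ n) v) i0 = real q * a + b * of_int K" for n q
  proof (induction q)
    case 0 show ?case by (intro exI[of _ 0]) simp
  next
    case (Suc q)
    then obtain K where K: "\<theta> ((mp_op B ^^ (n + q)) v) i0 - \<theta> ((mp_op B ^^ n) v) i0 = real q * a + b * of_int K" by blast
    obtain k where k: "\<theta> ((mp_op B ^^ Suc (n + q)) v) i0 - \<theta> ((mp_op B ^^ (n + q)) v) i0 = a + b * of_int k"
      using ar by blast
    have "\<theta> ((mp_op B ^^ (n + Suc q)) v) i0 - \<theta> ((mp_op B ^^ n) v) i0 = real (Suc q) * a + b * of_int (K + k)"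
      using K k by (simp add: algebra_simps)
    then show ?case by blast
  qed
  obtain N where N: "\<And>n j. n \<ge> N \<Longrightarrow> (mp_op B ^^ n) v j + real L * \<rho> \<le> (mp_op B ^^ (n + L)) v j"
    using orbit_mono[OF B sc, of v] unfolding L_def \<rho>_def by blast
  obtain C where C: "\<And>n j. (mp_op B ^^ n) v j \<le> real n * \<rho> + C"
    using orbit_upper[OF B, of v] unfolding \<rho>_def by blast
  define g where "g m = \<theta> ((mp_op B ^^ (N + m * L)) v) i0 - real (N + m * L) * \<rho>" for m
  have gup: "g m \<le> \<theta> (\<lambda>_. 0) i0 + C" for m
  proof -
    have "\<theta> ((mp_op B ^^ (N + m * L)) v) i0 \<le> \<theta> (\<lambda>j. (\<lambda>_. 0) j + (real (N + m * L) * \<rho> + C)) i0"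
      by (rule topical_mono[OF th]) (simp only: add_0_left C)
    also have "\<dots> = \<theta> (\<lambda>_. 0) i0 + (real (N + m * L) * \<rho> + C)" by (rule topical_shift[OF th])
    finally show ?thesis unfolding g_def by simp
  qed
  have ginc: "g m + s \<le> g (Suc m)" for m
  proof -
    define n where "n = N + m * L"
    have nS: "N + Suc m * L = n + L" unfolding n_def by simp
    have "\<theta> (\<lambda>j. (mp_op B ^^ n) v j + real L * \<rho>) i0 \<le> \<theta> ((mp_op B ^^ (n + L)) v) i0"
      by (rule topical_mono[OF th]) (use N n_def in simp)
    then have m1: "\<theta> ((mp_op B ^^ n) v) i0 + real L * \<rho> \<le> \<theta> ((mp_op B ^^ (n + L)) v) i0"
      using topical_shift[OF th] by simp
    obtain K where K: "\<theta> ((mp_op B ^^ (n + L)) v) i0 - \<theta> ((mp_op B ^^ n) v) i0 = real L * a + b * of_int K"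
      using tele by blast
    have inc: "g (Suc m) - g m = c + b * of_int K"
      unfolding g_def nS n_def[symmetric] using K unfolding c_def by (simp add: algebra_simps)
    have "0 \<le> c + b * of_int K" using inc m1 unfolding g_def nS n_def[symmetric] by (simp add: algebra_simps)
    then have "s \<le> c + b * of_int K" by (rule s(2))
    then show ?thesis using inc by simp
  qed
  have glow: "g 0 + real m * s \<le> g m" for m
  proof (induction m)
    case (Suc m) then show ?case using ginc[of m] by (simp add: algebra_simps)
  qed simp
  obtain m :: nat where m: "(\<theta> (\<lambda>_. 0) i0 + C - g 0) / s < real m" by (meson reals_Archimedean2)
  then have "\<theta> (\<lambda>_. 0) i0 + C - g 0 < real m * s" using s(1) by (simp add: divide_less_eq)
  then show False using glow[of m] gup[of m] by linarith
qed

end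

lemma support_ae:
  fixes M :: "'a measure" and X Y :: "'a \<Rightarrow> ('d::finite) mpmat"
  assumes P: "prob_space M" and X: "X \<in> borel_measurable M" and Y: "Y \<in> borel_measurable M"
    and val: "\<And>\<omega>. \<omega> \<in> space M \<Longrightarrow> mp_matrix (X \<omega>)"
    and d: "distr M borel X = distr M borel Y"
  shows "AE \<omega> in M. X \<omega> \<in> mp_support M Y"
proof -
  interpret prob_space M by (rule P)
  obtain BB :: "('d mpmat) set set" where cB: "countable BB" "topological_basis BB"
    using ex_countable_basis by blast
  define Z where "Z = {U \<in> BB. measure M {\<omega> \<in> space M. Y \<omega> \<in> U} = 0}"
  define Nf where "Nf U = X -` U \<inter> space M" for U
  have null: "Nf U \<in> null_sets M" if "U \<in> Z" for U
  proof -
    have U: "U \<in> BB" "measure M {\<omega> \<in> space M. Y \<omega> \<in> U} = 0" using that Z_def by auto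
    have ob: "open U" using cB(2) U(1) unfolding topological_basis_def by blast
    then have Ub: "U \<in> sets borel" by (rule borel_open)
    have "measure M (Nf U) = measure (distr M borel X) U" unfolding Nf_def using measure_distr[OF X Ub] by simp
    also have "\<dots> = measure (distr M borel Y) U" using d by simp
    also have "\<dots> = measure M (Y -` U \<inter> space M)" using measure_distr[OF Y Ub] by simp
    also have "Y -` U \<inter> space M = {\<omega> \<in> space M. Y \<omega> \<in> U}" by auto
    finally have m0: "measure M (Nf U) = 0" using U(2) by simp
    have ms: "Nf U \<in> sets M" unfolding Nf_def using X Ub by (rule measurable_sets)
    show ?thesis using m0 ms emeasure_eq_measure by (intro null_setsI) simp_all
  qed
  have cZ: "countable Z" using cB(1) unfolding Z_def by (rule countable_subset[rotated]) auto
  have "(\<Union>U\<in>Z. Nf U) \<in> null_sets M" by (rule null_sets_UN') (use cZ null in auto)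
  moreover have "{\<omega> \<in> space M. \<not> X \<omega> \<in> mp_support M Y} \<subseteq> (\<Union>U\<in>Z. Nf U)"
  proof
    fix \<omega> assume \<omega>: "\<omega> \<in> {\<omega> \<in> space M. \<not> X \<omega> \<in> mp_support M Y}"
    then obtain U where U: "open U" "X \<omega> \<in> U" "\<not> measure M {\<omega>\<in>space M. Y \<omega> \<in> U} > 0"
      using val unfolding mp_support_def by auto
    obtain U' where U': "U' \<in> BB" "X \<omega> \<in> U'" "U' \<subseteq> U" using topological_basisE[OF cB(2) U(1) U(2)] by blast
    have "Y -` U \<inter> space M \<in> sets M" using Y borel_open[OF U(1)] by (rule measurable_sets)
    moreover have "Y -` U \<inter> space M = {\<omega>\<in>space M. Y \<omega> \<in> U}" by auto
    ultimately have sU: "{\<omega>\<in>space M. Y \<omega> \<in> U} \<in> sets M" by simp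
    have "measure M {\<omega>\<in>space M. Y \<omega> \<in> U'} \<le> measure M {\<omega>\<in>space M. Y \<omega> \<in> U}"
      by (rule finite_measure_mono) (use U' sU in auto)
    then have "measure M {\<omega>\<in>space M. Y \<omega> \<in> U'} = 0" using U(3) measure_nonneg[of M "{\<omega>\<in>space M. Y \<omega> \<in> U'}"]
      by linarith
    then have "U' \<in> Z" using U' Z_def by auto
    then show "\<omega> \<in> (\<Union>U\<in>Z. Nf U)" using U' \<omega> Nf_def by auto
  qed
  ultimately show ?thesis by (rule AE_I')
qed

lemma iter_in_T: "(\<forall>k\<in>{1..Suc n}. A k \<omega> \<in> S) \<Longrightarrow> iter_op A (Suc n) \<omega> \<in> gen_semigroup S"
proof (induction n)
  case 0
  then have "A 1 \<omega> \<in> S" by simp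
  then show ?case using gen_semigroup.base by simp
next
  case (Suc n)
  have "iter_op A (Suc n) \<omega> \<in> gen_semigroup S" by (rule Suc.IH) (use Suc.prems in auto)
  moreover have "A (Suc (Suc n)) \<omega> \<in> S" using Suc.prems by auto
  ultimately have "mp_op (A (Suc (Suc n)) \<omega>) \<circ> iter_op A (Suc n) \<omega> \<in> gen_semigroup S"
    by (rule gen_semigroup.step)
  then show ?case by (simp only: iter_op.simps(2))
qed

theorem theorem2p10:
  fixes M :: "'a measure"
    and A :: "nat \<Rightarrow> 'a \<Rightarrow> ('d::finite) mpmat"
    and X0 :: "'a \<Rightarrow> ('d \<Rightarrow> real)"
  assumes "prob_space M"
    and meas: "\<And>n. n \<ge> 1 \<Longrightarrow> A n \<in> borel_measurable M"
    and valid: "\<And>n \<omega>. n \<ge> 1 \<Longrightarrow> \<omega> \<in> space M \<Longrightarrow> mp_matrix (A n \<omega>)"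
    and indep: "prob_space.indep_vars M (\<lambda>_. borel) A {1::nat..}"
    and ident: "\<And>n. n \<ge> 1 \<Longrightarrow> distr M borel (A n) = distr M borel (A 1)"
    and memloss: "\<exists>N\<ge>1. measure M {\<omega> \<in> space M. rank_one (iter_op A N \<omega>)} > 0"
    and moment: "\<exists>\<epsilon>>0. integrable M (\<lambda>\<omega>. sup_norm (mp_op (A 1 \<omega>) (\<lambda>_. 0)) powr (4 + \<epsilon>))"
    and X0_meas: "X0 \<in> borel_measurable M"
    and X0_bdd: "\<exists>C. AE \<omega> in M. \<forall>i. \<bar>X0 \<omega> i\<bar> \<le> C"
    and X0_indep: "prob_space.indep_set M
                     (sets (vimage_algebra (space M) X0 borel))
                     (sets (vimage_algebra (space M) (\<lambda>\<omega>. restrict (\<lambda>n. A n \<omega>) {1::nat..})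
                        (PiM {1::nat..} (\<lambda>_. borel))))"
    and arith: "alg_arithmetic (mp_support M (A 1))"
  shows "\<exists>a b::real. {rho_max B | B. B \<in> mp_support M (A 1) \<and> strongly_connected B}
            \<subseteq> {a + b * of_int k | k::int. True}"
proof -
  define S where "S = mp_support M (A 1)"
  obtain a b \<theta> where th: "topical \<theta>" "rank_one \<theta>" and
    ar: "\<And>B \<theta>' x. B \<in> S \<Longrightarrow> \<theta>' \<in> gen_semigroup S \<Longrightarrow> rank_one \<theta>' \<Longrightarrow>
       \<exists>k::int. \<forall>i. \<theta> (mp_op B (\<theta>' x)) i - \<theta> (\<theta>' x) i = a + b * of_int k"
  proof -
    obtain a b \<theta> where H: "topical \<theta> \<and> rank_one \<theta> \<and>
     (\<forall>B\<in>S. \<forall>\<theta>'\<in>gen_semigroup S. rank_one \<theta>' \<longrightarrow>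
        (\<forall>x. \<exists>k::int. \<forall>i. \<theta> (mp_op B (\<theta>' x)) i - \<theta> (\<theta>' x) i = a + b * of_int k))"
      using arith unfolding alg_arithmetic_def S_def by blast
    have h1: "topical \<theta>" and h2: "rank_one \<theta>" and
      h3: "\<forall>B\<in>S. \<forall>\<theta>'\<in>gen_semigroup S. rank_one \<theta>' \<longrightarrow>
        (\<forall>x. \<exists>k::int. \<forall>i. \<theta> (mp_op B (\<theta>' x)) i - \<theta> (\<theta>' x) i = a + b * of_int k)"
      using H by blast+
    show ?thesis
    proof (rule that[of \<theta> a b, OF h1 h2])
      fix B \<theta>' x assume "B \<in> S" "\<theta>' \<in> gen_semigroup S" "rank_one \<theta>'"
      then show "\<exists>k::int. \<forall>i. \<theta> (mp_op B (\<theta>' x)) i - \<theta> (\<theta>' x) i = a + b * of_int k"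
        using h3 by blast
    qed
  qed
  obtain N where N: "N \<ge> 1" "measure M {\<omega> \<in> space M. rank_one (iter_op A N \<omega>)} > 0"
    using memloss by blast
  define E where "E = {\<omega> \<in> space M. rank_one (iter_op A N \<omega>)}"
  have ae: "AE \<omega> in M. \<forall>k\<in>{1..N}. A k \<omega> \<in> S"
  proof (rule AE_finite_allI)
    fix k assume k: "k \<in> {1..N}"
    have k1: "1 \<le> k" using k by simp
    show "AE \<omega> in M. A k \<omega> \<in> S" unfolding S_def
      by (rule support_ae[OF assms(1) meas[OF k1] meas[OF order_refl] valid[OF k1] ident[OF k1]])
  qed simp
  have "\<exists>\<omega> \<in> E. \<forall>k\<in>{1..N}. A k \<omega> \<in> S"
  proof (rule ccontr)
    assume nex: "\<not> ?thesis"
    from ae obtain Nn where Nn: "{\<omega> \<in> space M. \<not> (\<forall>k\<in>{1..N}. A k \<omega> \<in> S)} \<subseteq> Nn"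
        "emeasure M Nn = 0" "Nn \<in> sets M" by (rule AE_E)
    have "E \<subseteq> Nn" using Nn(1) nex unfolding E_def by blast
    then have "emeasure M E \<le> emeasure M Nn" by (rule emeasure_mono[OF _ Nn(3)])
    then have "emeasure M E = 0" using Nn(2) by simp
    then have "measure M E = 0" by (simp add: measure_def)
    then show False using N(2) E_def by simp
  qed
  then obtain \<omega> where \<omega>: "\<omega> \<in> E" "\<forall>k\<in>{1..N}. A k \<omega> \<in> S" by blast
  define n0 where "n0 = N - 1"
  have n0: "N = Suc n0" using N(1) unfolding n0_def by simp
  define \<theta>0 where "\<theta>0 = iter_op A N \<omega>"
  have "iter_op A (Suc n0) \<omega> \<in> gen_semigroup S" by (rule iter_in_T) (use \<omega>(2) n0 in simp)
  then have \<theta>01: "\<theta>0 \<in> gen_semigroup S" unfolding \<theta>0_def n0 .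
  have \<theta>02: "rank_one \<theta>0" using \<omega>(1) unfolding E_def \<theta>0_def by simp
  note \<theta>0 = \<theta>01 \<theta>02
  define v where "v = \<theta>0 (\<lambda>_. 0)"
  define L where "L = real (fact CARD('d))"
  have Lpos: "L > 0" unfolding L_def by simp
  show ?thesis
  proof (rule exI[of _ a], rule exI[of _ "b / L"], rule subsetI)
    fix r assume "r \<in> {rho_max B |B. B \<in> mp_support M (A 1) \<and> strongly_connected B}"
    then obtain B where B: "B \<in> S" "strongly_connected B" "r = rho_max B" unfolding S_def by blast
    have Bm: "mp_matrix B" using B(1) unfolding S_def mp_support_def by auto
    have inT: "(mp_op B ^^ n) \<circ> \<theta>0 \<in> gen_semigroup S" for n
    proof (induction n)
      case 0 then show ?case using \<theta>0(1) by simp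
    next
      case (Suc n)
      have "(mp_op B ^^ Suc n) \<circ> \<theta>0 = mp_op B \<circ> ((mp_op B ^^ n) \<circ> \<theta>0)" by (simp add: comp_assoc)
      then show ?case using gen_semigroup.step[OF Suc B(1)] by metis
    qed
    have r1: "rank_one ((mp_op B ^^ n) \<circ> \<theta>0)" for n
      unfolding rank_one_def
    proof (intro allI)
      fix x y
      obtain c where c: "\<theta>0 x = (\<lambda>i. \<theta>0 y i + c)" using \<theta>0(2) unfolding rank_one_def by blast
      have "((mp_op B ^^ n) \<circ> \<theta>0) x = (\<lambda>i. ((mp_op B ^^ n) \<circ> \<theta>0) y i + c)"
        using pow_shift[OF Bm, of n "\<theta>0 y" c] c by simp
      then show "\<exists>c. ((mp_op B ^^ n) \<circ> \<theta>0) x = (\<lambda>i. ((mp_op B ^^ n) \<circ> \<theta>0) y i + c)" by blast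
    qed
    have st: "\<exists>k::int. \<theta> ((mp_op B ^^ Suc n) v) undefined - \<theta> ((mp_op B ^^ n) v) undefined = a + b * of_int k" for n
    proof -
      obtain k where k: "\<forall>i. \<theta> (mp_op B (((mp_op B ^^ n) \<circ> \<theta>0) (\<lambda>_. 0))) i - \<theta> (((mp_op B ^^ n) \<circ> \<theta>0) (\<lambda>_. 0)) i = a + b * of_int k"
        using ar[OF B(1) inT r1] by blast
      then show ?thesis using k[rule_format, of undefined] unfolding v_def by auto
    qed
    obtain k where k: "real (fact CARD('d)) * (a - rho_max B) + b * of_int k = 0"
      using main_alg[OF Bm B(2) th(1) st] by blast
    then have "L * (a - r) + b * of_int k = 0" using B(3) unfolding L_def by simp
    then have "r = a + b / L * of_int k" using Lpos by (simp add: field_simps)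
    then show "r \<in> {a + b / L * of_int k |k. True}" by blast
  qed
qed

end
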